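(* Let $w$ be a word of length $k$ with $s \ne k-1$. Then either $b_{t(k-s)} = 0$ for every integer $1 \le t \le \lfloor k/(k-s) \rfloor$, or $b_{t(k-s)-1} = 0$ for every integer $1 \le t \le \lfloor (k+1)/(k-s) \rfloor$.
   Context: A word of length $k$ is written $w = w_k\dots w_1$. Autocorrelation digits: for $1 \le i \le k$, $b_i = 1$ if $w_j = w_{k-i+j}$ for all $j=1,\dots,i$, else $b_i = 0$ (so $b_k = 1$); convention $b_0=1$. $s = \max\{j \in\{1,\dots,k-1\}: b_j=1\}$, or $s=0$ if no such $j$. *)

theory Defs
  imports Main
begin

text \<open>A word w = w_k ... w_1 of length k is an 'a list read left to right,
  so the letter w_j (1 <= j <= k) is the list element at position k - j.\<close>
definition letter :: "'a list \<Rightarrow> nat \<Rightarrow> 'a" where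
  "letter w j = w ! (length w - j)"

definition autocorr :: "'a list \<Rightarrow> nat \<Rightarrow> nat" where
  "autocorr w i =
     (if i = 0 \<or> (i \<le> length w \<and>
          (\<forall>j\<in>{1..i}. letter w j = letter w (length w - i + j)))
      then 1 else 0)"

definition maxcorr :: "'a list \<Rightarrow> nat" where
  "maxcorr w = (let S = {j\<in>{1..<length w}. autocorr w j = 1} in
                if S = {} then 0 else Max S)"

end

theory Submission
  imports Defs
begin

definition per :: "'a list \<Rightarrow> nat \<Rightarrow> bool" where
  "per x r \<longleftrightarrow> (\<forall>i. i + r < length x \<longrightarrow> x ! i = x ! (i + r))"

lemma autocorr_per:
  assumes "1 \<le> i" "i \<le> length w"
  shows "autocorr w i = 1 \<longleftrightarrow> per w (length w - i)"
proof -
  let ?k = "length w"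
  have "(\<forall>j\<in>{1..i}. letter w j = letter w (?k - i + j)) \<longleftrightarrow> per w (?k - i)"
  proof
    assume H: "\<forall>j\<in>{1..i}. letter w j = letter w (?k - i + j)"
    show "per w (?k - i)" unfolding per_def
    proof (intro allI impI)
      fix m assume m: "m + (?k - i) < ?k"
      have mem: "i - m \<in> {1..i}" using m assms by auto
      have e1: "?k - (i - m) = m + (?k - i)" using m assms by auto
      have e2: "?k - (?k - i + (i - m)) = m" using m assms by auto
      from H[rule_format, OF mem] show "w ! m = w ! (m + (?k - i))"
        unfolding letter_def e1 e2 by simp
    qed
  next
    assume P: "per w (?k - i)"
    show "\<forall>j\<in>{1..i}. letter w j = letter w (?k - i + j)"
    proof
      fix j assume j: "j \<in> {1..i}"
      have e1: "?k - j = (i - j) + (?k - i)" using j assms by auto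
      have e2: "?k - (?k - i + j) = i - j" using j assms by auto
      have "i - j + (?k - i) < ?k" using j assms by auto
      with P have "w ! (i - j) = w ! (i - j + (?k - i))" unfolding per_def by blast
      then show "letter w j = letter w (?k - i + j)" unfolding letter_def e1 e2 by simp
    qed
  qed
  then show ?thesis unfolding autocorr_def using assms by auto
qed

lemma per_mult:
  assumes "per x p" shows "i + m * p < length x \<Longrightarrow> x ! i = x ! (i + m * p)"
proof (induction m)
  case 0 then show ?case by simp
next
  case (Suc m)
  have "x ! (i + m * p) = x ! (i + m * p + p)"
    using assms Suc.prems unfolding per_def by (auto simp: algebra_simps)
  then show ?case using Suc by (auto simp: algebra_simps)
qed

lemma per_diff:
  assumes "per x p" "per x q" "p \<le> q" "p + q \<le> length x"
  shows "per x (q - p)"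
  unfolding per_def
proof (intro allI impI)
  fix i assume i: "i + (q - p) < length x"
  show "x ! i = x ! (i + (q - p))"
  proof (cases "i + q < length x")
    case True
    then have "x ! i = x ! (i + q)" using assms(2) unfolding per_def by blast
    moreover have "x ! (i + (q - p)) = x ! (i + (q - p) + p)"
      using assms(1) True assms(3) unfolding per_def by auto
    ultimately show ?thesis using assms(3) by simp
  next
    case False
    then have ip: "i \<ge> p" using assms by linarith
    have "x ! (i - p) = x ! (i - p + p)" using assms(1) ip i unfolding per_def by auto
    moreover have "x ! (i - p) = x ! (i - p + q)" using assms(2) ip i assms(3) unfolding per_def by auto
    ultimately show ?thesis using ip assms(3) by (simp add: algebra_simps)
  qed
qed

lemma weak_fw:
  "per x p \<Longrightarrow> per x q \<Longrightarrow> p + q \<le> length x \<Longrightarrow> per x (gcd p q)"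
proof (induction "p + q" arbitrary: p q rule: less_induct)
  case less
  show ?case
  proof (cases "p = 0 \<or> q = 0")
    case True then show ?thesis using less by auto
  next
    case False
    show ?thesis
    proof (cases "p \<le> q")
      case True
      have "per x (q - p)" using per_diff[OF less(2,3) True] less(4) by simp
      then have "per x (gcd p (q - p))" using less(1)[of p "q - p"] less False True by auto
      moreover have "gcd p (q - p) = gcd p q"
        using gcd_diff1_nat[OF True] by (simp add: ac_simps)
      ultimately show ?thesis by simp
    next
      case F: False
      have "per x (p - q)" using per_diff[OF less(3,2)] F less(4) by simp
      then have "per x (gcd (p - q) q)" using less(1)[of "p - q" q] less False F by auto
      then show ?thesis using F by (simp add: gcd_diff1_nat)
    qed
  qed
qed

lemma special:
  assumes "per x p" "p dvd length x" "per x (length x + 1 - p)" "1 \<le> p" "p \<le> length x"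
  shows "per x 1"
proof -
  let ?n = "length x"
  obtain m' where m': "?n = p * m'" using assms(2) by (auto elim: dvdE)
  define m where "m = m'"
  have m: "?n = m * p" using m' unfolding m_def by simp
  have mp: "m \<ge> 1" using m assms(4,5) by (cases m) auto
  have np: "?n - p = (m - 1) * p" using m mp by (simp add: diff_mult_distrib)
  have step: "x ! j = x ! (j + 1)" if j: "j + 1 < p" for j
  proof -
    have e: "j + (?n + 1 - p) = (j + 1) + (m - 1) * p" using np j assms(5) by linarith
    have lt1: "j + (?n + 1 - p) < ?n" using j assms(5) by linarith
    have lt2: "(j + 1) + (m - 1) * p < ?n" using lt1 e by linarith
    have "x ! j = x ! (j + (?n + 1 - p))" using assms(3) lt1 unfolding per_def by blast
    also have "\<dots> = x ! ((j + 1) + (m - 1) * p)" using e by simp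
    also have "\<dots> = x ! (j + 1)" using per_mult[OF assms(1) lt2] by simp
    finally show ?thesis .
  qed
  have all: "j < p \<Longrightarrow> x ! j = x ! 0" for j
  proof (induction j)
    case 0 then show ?case by simp
  next
    case (Suc j) then show ?case using step[of j] by simp
  qed
  have allx: "i < ?n \<Longrightarrow> x ! i = x ! 0" for i
  proof -
    assume i: "i < ?n"
    have "x ! (i mod p) = x ! (i mod p + (i div p) * p)"
      using per_mult[OF assms(1), of "i mod p" "i div p"] i by simp
    then have "x ! i = x ! (i mod p)" by simp
    also have "\<dots> = x ! 0" using all[of "i mod p"] assms(4) by simp
    finally show ?thesis .
  qed
  show ?thesis unfolding per_def
  proof (intro allI impI)
    fix i assume "i + 1 < length x"
    then show "x ! i = x ! (i + 1)" using allx[of i] allx[of "i+1"] by simp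
  qed
qed

theorem proposition4p2:
  fixes w :: "'a list" and k s :: nat
  assumes "length w = k" and "1 \<le> k"
    and "s = maxcorr w" and "s \<noteq> k - 1"
  shows "(\<forall>t::nat. 1 \<le> t \<and> t \<le> k div (k - s) \<longrightarrow> autocorr w (t * (k - s)) = 0)
       \<or> (\<forall>t::nat. 1 \<le> t \<and> t \<le> (k + 1) div (k - s) \<longrightarrow> autocorr w (t * (k - s) - 1) = 0)"
proof (rule ccontr)
  define S where "S = {j\<in>{1..<k}. autocorr w j = 1}"
  have fS: "finite S" unfolding S_def by simp
  have "s = (let S = {j\<in>{1..<length w}. autocorr w j = 1} in if S = {} then 0 else Max S)"
    using assms(3) unfolding maxcorr_def .
  then have sdef: "s = (if S = {} then 0 else Max S)" unfolding Let_def S_def assms(1) .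
  have sk: "s < k"
  proof (cases "S = {}")
    case True then show ?thesis using sdef assms by simp
  next
    case False then have "s \<in> S" using sdef fS Max_in by auto
    then show ?thesis unfolding S_def by auto
  qed
  define p where "p = k - s"
  have p2: "p \<ge> 2" using sk assms unfolding p_def by auto
  have perp: "per w p"
  proof (cases "S = {}")
    case True then show ?thesis using sdef assms unfolding p_def per_def by simp
  next
    case False then have "s \<in> S" using sdef fS Max_in by auto
    then have "autocorr w s = 1" "1 \<le> s" "s \<le> k" unfolding S_def by auto
    then show ?thesis using autocorr_per[of s w] assms unfolding p_def by simp
  qed
  have minp: "False" if "per w g" "1 \<le> g" "g < p" for g
  proof -
    have "k - g \<in> S" unfolding S_def using that autocorr_per[of "k - g" w] assms sk
      unfolding p_def by auto
    then have "S \<noteq> {}" "k - g \<le> Max S" using fS by auto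
    then show False using sdef that unfolding p_def by auto
  qed
  assume "\<not> ?thesis"
  then obtain t1 t2 where t1: "1 \<le> t1" "t1 \<le> k div p" "autocorr w (t1 * p) \<noteq> 0"
    and t2: "1 \<le> t2" "t2 \<le> (k + 1) div p" "autocorr w (t2 * p - 1) \<noteq> 0"
    unfolding p_def by blast
  have "t1 * p \<le> k div p * p" using t1 by simp
  then have t1k: "t1 * p \<le> k" using div_times_less_eq_dividend le_trans by blast
  have t1p: "1 \<le> t1 * p" using t1 p2 by simp
  have "autocorr w (t1 * p) = 1" using t1(3) unfolding autocorr_def by (auto split: if_splits)
  then have per1: "per w (k - t1 * p)" using autocorr_per[OF t1p, of w] t1k assms(1) by simp
  have pk: "p dvd k"
  proof -
    have "per w (gcd p (k - t1 * p))"
    proof (rule weak_fw[OF perp per1])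
      have "p \<le> t1 * p" using t1 by simp
      then show "p + (k - t1 * p) \<le> length w" using t1k assms by linarith
    qed
    moreover have g1: "1 \<le> gcd p (k - t1 * p)" using p2 by (simp add: Suc_leI)
    moreover have "gcd p (k - t1 * p) \<le> p" using p2 by simp
    ultimately have "gcd p (k - t1 * p) = p" using minp by fastforce
    then have "p dvd (k - t1 * p)" using gcd_dvd2[of p "k - t1 * p"] by simp
    then have "p dvd (k - t1 * p + t1 * p)" by simp
    then show ?thesis using t1k by simp
  qed
  have "t2 * p \<le> (k + 1) div p * p" using t2 by simp
  then have t2k: "t2 * p \<le> k + 1" using div_times_less_eq_dividend le_trans by blast
  have "p \<le> t2 * p" using t2 by simp
  then have t2p: "1 \<le> t2 * p - 1" using p2 by linarith
  have "autocorr w (t2 * p - 1) = 1" using t2(3) unfolding autocorr_def by (auto split: if_splits)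
  then have "per w (k - (t2 * p - 1))" using autocorr_per[OF t2p, of w] t2k assms(1) t2p by simp
  moreover have "k - (t2 * p - 1) = k + 1 - t2 * p" using t2p t2k by linarith
  ultimately have per2: "per w (k + 1 - t2 * p)" by simp
  show False
  proof (cases "t2 = 1")
    case True
    have "per w 1" using special[OF perp] pk per2 True p2 sk assms unfolding p_def by auto
    then show False using minp[of 1] p2 by simp
  next
    case False
    have sum: "p + (k + 1 - t2 * p) \<le> k"
    proof -
      have "2 * p \<le> t2 * p" using False t2 by simp
      then show ?thesis using t2k p2 by linarith
    qed
    have pg: "per w (gcd p (k + 1 - t2 * p))" using weak_fw[OF perp per2] sum assms by simp
    have "gcd p (k + 1 - t2 * p) dvd 1"
    proof -
      let ?g = "gcd p (k + 1 - t2 * p)"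
      have "?g dvd k" using pk by (meson dvd_trans gcd_dvd1)
      moreover have "?g dvd (k + 1 - t2 * p) + t2 * p"
        by (meson dvd_add dvd_mult gcd_dvd1 gcd_dvd2)
      moreover have "(k + 1 - t2 * p) + t2 * p = k + 1" using t2k by simp
      ultimately have "?g dvd k" "?g dvd k + 1" by simp_all
      then show ?thesis using dvd_add_right_iff[of ?g k 1] by simp
    qed
    then have "gcd p (k + 1 - t2 * p) = 1" by simp
    then show False using pg minp[of 1] p2 by simp
  qed
qed

end
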